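(* Let $F$ be a field of characteristic zero. Fix integers $d,\tau\ge0$ and let $\{\beta_i\}_{i\ge\tau}\subseteq F$ satisfy $$\beta_s\beta_t=(\beta_s+\beta_t)\beta_{s+t+d}\quad\text{for all } s,t\ge\tau.$$ Then either $\beta_i=0$ for all $i\ge\tau$, or there exist integers $k$ and $\Delta$ with $\beta_k\ne0$, $0\le k-\tau<\Delta\le k+d$ and $\Delta\mid k+d$, such that for all $t\ge\tau$ $$\beta_t=\begin{cases}\dfrac{(k+d)\beta_k}{k+d+\Delta s}, & t=k+\Delta s,\ s\ge0,\\ 0,&\text{otherwise}.\end{cases}$$ In particular, if $d=\tau=0$, then $\beta_i=0$ for all $i\ge0$. *)

theory Defs
  imports Main
begin

end

theory Submission
  imports Defs
begin

theorem lemma2p3: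
  fixes \<beta> :: "nat \<Rightarrow> 'a :: field_char_0" and d \<tau> :: nat
  assumes rec: "\<And>s t. s \<ge> \<tau> \<Longrightarrow> t \<ge> \<tau> \<Longrightarrow>
                  \<beta> s * \<beta> t = (\<beta> s + \<beta> t) * \<beta> (s + t + d)"
  shows "((\<forall>i\<ge>\<tau>. \<beta> i = 0) \<or>
          (\<exists>k \<Delta> :: nat. \<beta> k \<noteq> 0 \<and> \<tau> \<le> k \<and> k - \<tau> < \<Delta> \<and> \<Delta> \<le> k + d \<and> \<Delta> dvd (k + d) \<and>
             (\<forall>s. \<beta> (k + \<Delta> * s) = of_nat (k + d) * \<beta> k / of_nat (k + d + \<Delta> * s)) \<and>
             (\<forall>t\<ge>\<tau>. (\<not> (\<exists>s. t = k + \<Delta> * s)) \<longrightarrow> \<beta> t = 0)))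
         \<and> (d = 0 \<and> \<tau> = 0 \<longrightarrow> (\<forall>i. \<beta> i = 0))"
proof -
  define P where "P j \<longleftrightarrow> \<tau> \<le> j \<and> \<beta> j \<noteq> 0" for j
  have C: "P (i+j+d)" if "P i" "P j" for i j
  proof -
    have "\<beta> i * \<beta> j \<noteq> 0" using that by (simp add: P_def)
    then have "\<beta> (i+j+d) \<noteq> 0" using rec[of i j] that by (auto simp: P_def)
    then show ?thesis using that by (simp add: P_def)
  qed
  have L: "P j" if "P i" "\<tau> \<le> j" "P (i+j+d)" for i j
  proof (rule ccontr)
    assume "\<not> P j"
    then have "\<beta> j = 0" using that by (simp add: P_def)
    then have "\<beta> i * \<beta> (i+j+d) = 0" using rec[of i j] that by (simp add: P_def)
    then show False using that by (simp add: P_def)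
  qed
  have pos: "i + d > 0" if "P i" for i
  proof (rule ccontr)
    assume "\<not> i + d > 0"
    then have "i = 0" "d = 0" by auto
    then have "\<beta> 0 * \<beta> 0 = (\<beta> 0 + \<beta> 0) * \<beta> 0" using rec[of 0 0] that by (simp add: P_def)
    then have "\<beta> 0 * \<beta> 0 = 0" by (simp add: algebra_simps)
    then show False using that \<open>i = 0\<close> by (simp add: P_def)
  qed
  have H: "1 / \<beta> (i+j+d) = 1 / \<beta> i + 1 / \<beta> j" if "P i" "P j" for i j
  proof -
    have nz: "\<beta> i \<noteq> 0" "\<beta> j \<noteq> 0" "\<beta> (i+j+d) \<noteq> 0" using that C[OF that] by (auto simp: P_def)
    have "\<beta> i * \<beta> j = (\<beta> i + \<beta> j) * \<beta> (i+j+d)" using rec that by (simp add: P_def)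
    then have e: "\<beta> i + \<beta> j = \<beta> i * \<beta> j / \<beta> (i+j+d)" using nz by (simp add: field_simps)
    have "1 / \<beta> i + 1 / \<beta> j = (\<beta> i + \<beta> j) / (\<beta> i * \<beta> j)" using nz by (simp add: field_simps)
    also have "\<dots> = 1 / \<beta> (i+j+d)" unfolding e using nz by simp
    finally show ?thesis by simp
  qed
  define R where "R n i = n * (i + d) - d" for n i
  have Rprop: "P (R n i) \<and> 1 / \<beta> (R n i) = of_nat n / \<beta> i" if "P i" "n \<ge> 1" for n i
    using that(2)
  proof (induction n)
    case 0 then show ?case by simp
  next
    case (Suc n)
    show ?case
    proof (cases "n = 0")
      case True then show ?thesis using \<open>P i\<close> by (simp add: R_def)
    next
      case False
      then have IH: "P (R n i)" "1 / \<beta> (R n i) = of_nat n / \<beta> i" using Suc by auto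
      have "n * (i + d) \<ge> i + d" using False by simp
      then have "d \<le> n * (i + d)" by linarith
      then have eq: "R (Suc n) i = R n i + i + d" unfolding R_def mult_Suc by linarith
      show ?thesis unfolding eq using C[OF IH(1) \<open>P i\<close>] H[OF IH(1) \<open>P i\<close>] IH(2)
        by (simp add: add_divide_distrib)
    qed
  qed
  have main: "\<exists>k \<Delta> :: nat. \<beta> k \<noteq> 0 \<and> \<tau> \<le> k \<and> k - \<tau> < \<Delta> \<and> \<Delta> \<le> k + d \<and> \<Delta> dvd (k + d) \<and>
             (\<forall>s. \<beta> (k + \<Delta> * s) = of_nat (k + d) * \<beta> k / of_nat (k + d + \<Delta> * s)) \<and>
             (\<forall>t\<ge>\<tau>. (\<not> (\<exists>s. t = k + \<Delta> * s)) \<longrightarrow> \<beta> t = 0)"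
    if ex: "\<exists>i\<ge>\<tau>. \<beta> i \<noteq> 0"
  proof -
    define k where "k = (LEAST j. P j)"
    have Pk: "P k" unfolding k_def using ex by (metis LeastI P_def)
    have kmin: "k \<le> j" if "P j" for j unfolding k_def using that by (rule Least_le)
    have P2: "P (k + k + d) \<and> k + k + d > k" using C[OF Pk Pk] pos[OF Pk] by simp
    define k2 where "k2 = (LEAST j. P j \<and> j > k)"
    have Pk2: "P k2 \<and> k2 > k" unfolding k2_def using P2 by (rule LeastI)
    have k2min: "k2 \<le> j" if "P j" "j > k" for j unfolding k2_def using that by (simp add: Least_le)
    define \<Delta> where "\<Delta> = k2 - k"
    have k2eq: "k2 = k + \<Delta>" using Pk2 by (simp add: \<Delta>_def)
    have Dpos: "\<Delta> > 0" using Pk2 by (simp add: \<Delta>_def)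
    have shift: "P j \<longleftrightarrow> P (j + i + d)" if "P i" "\<tau> \<le> j" for i j
      using C[OF _ that(1), of j] L[OF that(1) that(2)] by (auto simp: add_ac)
    have per: "P j \<longleftrightarrow> P (j + \<Delta>)" if "\<tau> \<le> j" for j
    proof -
      have "P j \<longleftrightarrow> P (j + k2 + d)" using shift[OF conjunct1[OF Pk2] that] .
      also have "j + k2 + d = (j + \<Delta>) + k + d" using k2eq by simp
      also have "P \<dots> \<longleftrightarrow> P (j + \<Delta>)" using shift[OF Pk, of "j + \<Delta>"] that by simp
      finally show ?thesis .
    qed
    have tk: "\<tau> \<le> k" using Pk by (simp add: P_def)
    have kt: "k - \<tau> < \<Delta>"
    proof (rule ccontr)
      assume "\<not> k - \<tau> < \<Delta>"
      then have "\<tau> \<le> k - \<Delta>" "k - \<Delta> + \<Delta> = k" using tk by auto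
      then have "P (k - \<Delta>)" using per[of "k - \<Delta>"] Pk by simp
      then have "k \<le> k - \<Delta>" by (rule kmin)
      then show False using Dpos tk \<open>k - \<Delta> + \<Delta> = k\<close> by simp
    qed
    have fwd: "P (k + \<Delta> * s)" for s
    proof (induction s)
      case 0 then show ?case using Pk by simp
    next
      case (Suc s)
      then show ?case using per[of "k + \<Delta> * s"] tk by (simp add: add_ac)
    qed
    have bwd: "\<exists>s. j = k + \<Delta> * s" if "P j" for j
      using that
    proof (induction j rule: less_induct)
      case (less j)
      show ?case
      proof (cases "j < \<tau> + \<Delta>")
        case True
        have "k \<le> j" using less.prems by (rule kmin)
        have "j = k"
        proof (rule ccontr)
          assume "j \<noteq> k"
          then have "k2 \<le> j" using k2min[OF less.prems] \<open>k \<le> j\<close> by simp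
          then show False using True k2eq kt tk by simp
        qed
        then show ?thesis by (intro exI[of _ 0]) simp
      next
        case False
        then have "\<tau> \<le> j - \<Delta>" "j - \<Delta> + \<Delta> = j" by auto
        then have "P (j - \<Delta>)" using per[of "j - \<Delta>"] less.prems by simp
        then obtain s where "j - \<Delta> = k + \<Delta> * s" using less.IH[of "j - \<Delta>"] Dpos False by auto
        then have "j = k + \<Delta> * Suc s" using \<open>j - \<Delta> + \<Delta> = j\<close> by simp
        then show ?thesis by blast
      qed
    qed
    obtain s2 where s2: "k + k + d = k + \<Delta> * s2" using bwd P2 by blast
    have dvd: "\<Delta> dvd (k + d)" using s2 by simp
    have Dle: "\<Delta> \<le> k + d" using k2min[of "k+k+d"] P2 k2eq by simp
    have val: "\<beta> j = of_nat (k + d) * \<beta> k / of_nat (j + d)" if "P j" for j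
    proof -
      have "R (k + d) j = R (j + d) k" by (simp add: R_def algebra_simps)
      then have "of_nat (k + d) / \<beta> j = (of_nat (j + d) / \<beta> k :: 'a)"
        using Rprop[OF that, of "k+d"] Rprop[OF Pk, of "j+d"] pos[OF that] pos[OF Pk] by simp
      moreover have "\<beta> j \<noteq> 0" "\<beta> k \<noteq> 0" using that Pk by (auto simp: P_def)
      moreover have "(of_nat (j + d) :: 'a) \<noteq> 0" "(of_nat (k + d) :: 'a) \<noteq> 0"
        using pos[OF that] pos[OF Pk] by (simp_all del: of_nat_add)
      ultimately show ?thesis by (simp add: field_simps)
    qed
    show ?thesis
    proof (intro exI conjI allI impI)
      show "\<beta> k \<noteq> 0" using Pk by (simp add: P_def)
      show "\<tau> \<le> k" by (rule tk)
      show "k - \<tau> < \<Delta>" by (rule kt)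
      show "\<Delta> \<le> k + d" by (rule Dle)
      show "\<Delta> dvd (k + d)" by (rule dvd)
      fix s
      show "\<beta> (k + \<Delta> * s) = of_nat (k + d) * \<beta> k / of_nat (k + d + \<Delta> * s)"
        using val[OF fwd[of s]] by (simp add: add_ac)
    next
      fix t assume "\<tau> \<le> t" "\<not> (\<exists>s. t = k + \<Delta> * s)"
      then show "\<beta> t = 0" using bwd[of t] by (auto simp: P_def)
    qed
  qed
  show ?thesis
  proof (intro conjI impI)
    show "(\<forall>i\<ge>\<tau>. \<beta> i = 0) \<or>
          (\<exists>k \<Delta> :: nat. \<beta> k \<noteq> 0 \<and> \<tau> \<le> k \<and> k - \<tau> < \<Delta> \<and> \<Delta> \<le> k + d \<and> \<Delta> dvd (k + d) \<and>
             (\<forall>s. \<beta> (k + \<Delta> * s) = of_nat (k + d) * \<beta> k / of_nat (k + d + \<Delta> * s)) \<and>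
             (\<forall>t\<ge>\<tau>. (\<not> (\<exists>s. t = k + \<Delta> * s)) \<longrightarrow> \<beta> t = 0))"
      using main by blast
  next
    assume d0: "d = 0 \<and> \<tau> = 0"
    show "\<forall>i. \<beta> i = 0"
    proof (rule ccontr)
      assume "\<not> (\<forall>i. \<beta> i = 0)"
      then have "\<exists>i\<ge>\<tau>. \<beta> i \<noteq> 0" using d0 by auto
      then obtain k \<Delta> where "k - \<tau> < \<Delta>" "\<Delta> \<le> k + d" using main by blast
      then show False using d0 by simp
    qed
  qed
qed

end
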